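(* Sufficiency and separation are not incrementally conservative fairness measures. Precisely: there exist binary random variables $Y, A$ and two binary predictors $R, R'$ of $Y$, defined on the same population (so that the joint distribution of $(Y,A)$ is the same in both cases), such that $R$ satisfies both sufficiency ($Y \perp A \mid R$) and separation ($R \perp A \mid Y$), $R'$ has strictly higher accuracy than $R$, i.e. $P(R'=Y) > P(R=Y)$, and yet $R'$ satisfies neither sufficiency ($Y \perp A \mid R'$ fails) nor separation ($R' \perp A \mid Y$ fails).
   Context: Setting: $Y$ is the true label, $R$ is a prediction of $Y$, and $A$ is a group-membership variable, all random variables on a common probability space. $X \perp Z$ denotes independence, $P(X,Z)=P(X)P(Z)$; $X \perp Z \mid W$ denotes conditional independence, $P(X \mid Z, W) = P(X \mid W)$. A predictor $R$ satisfies sufficiency if $Y \perp A \mid R$, and separation if $R \perp A \mid Y$. The accuracy of a predictor $R$ is the degree to which it agrees with $Y$, i.e. $P(R=Y)$. A fairness measure is called incrementally conservative if the degree to which the measure is satisfied does not decrease when the accuracy of the predictor is increased; in particular, failure of incremental conservativeness is witnessed by a predictor satisfying the measure exactly together with a more accurate predictor that no longer satisfies it. *)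

theory Defs
  imports "HOL-Probability.Probability"
begin

definition cond_indep :: "'o pmf \<Rightarrow> ('o \<Rightarrow> 'a) \<Rightarrow> ('o \<Rightarrow> 'b) \<Rightarrow> ('o \<Rightarrow> 'c) \<Rightarrow> bool" where
  "cond_indep p X Z W \<longleftrightarrow>
     (\<forall>x z w. measure_pmf.prob p {\<omega>. X \<omega> = x \<and> Z \<omega> = z \<and> W \<omega> = w} * measure_pmf.prob p {\<omega>. W \<omega> = w}
            = measure_pmf.prob p {\<omega>. X \<omega> = x \<and> W \<omega> = w} * measure_pmf.prob p {\<omega>. Z \<omega> = z \<and> W \<omega> = w})"

definition sufficiency :: "'o pmf \<Rightarrow> ('o \<Rightarrow> 'y) \<Rightarrow> ('o \<Rightarrow> 'g) \<Rightarrow> ('o \<Rightarrow> 'y) \<Rightarrow> bool" where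
  "sufficiency p Y A R \<longleftrightarrow> cond_indep p Y A R"

definition separation :: "'o pmf \<Rightarrow> ('o \<Rightarrow> 'y) \<Rightarrow> ('o \<Rightarrow> 'g) \<Rightarrow> ('o \<Rightarrow> 'y) \<Rightarrow> bool" where
  "separation p Y A R \<longleftrightarrow> cond_indep p R A Y"

definition accuracy :: "'o pmf \<Rightarrow> ('o \<Rightarrow> 'y) \<Rightarrow> ('o \<Rightarrow> 'y) \<Rightarrow> real" where
  "accuracy p Y R = measure_pmf.prob p {\<omega>. R \<omega> = Y \<omega>}"

end

theory Submission
  imports Defs
begin

definition pp :: "nat pmf" where "pp = pmf_of_set {0,1,2,3}"

lemma pp_prob: "measure_pmf.prob pp {\<omega>. P \<omega>} =
   ((if P 0 then 1 else 0) + (if P 1 then 1 else 0) + (if P 2 then 1 else 0) + (if P 3 then 1 else 0)) / 4"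
proof -
  have "measure_pmf.prob pp {\<omega>. P \<omega>} = real (card ({0,1,2,3::nat} \<inter> {\<omega>. P \<omega>})) / 4"
    unfolding pp_def by (subst measure_pmf_of_set) auto
  also have "real (card ({0,1,2,3::nat} \<inter> {\<omega>. P \<omega>})) = (\<Sum>\<omega>\<in>{0,1,2,3::nat}. if P \<omega> then 1 else 0)"
    by (simp add: sum.If_cases Int_commute)
  also have "\<dots> = (if P 0 then 1 else 0) + (if P 1 then 1 else 0) + (if P 2 then 1 else 0) + (if P 3 then 1 else 0)"
    by simp
  finally show ?thesis .
qed

theorem proposition2p8:
  shows "\<exists>(p :: nat pmf) (Y :: nat \<Rightarrow> bool) (A :: nat \<Rightarrow> bool) (R :: nat \<Rightarrow> bool) (R' :: nat \<Rightarrow> bool).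
           sufficiency p Y A R \<and> separation p Y A R \<and>
           accuracy p Y R' > accuracy p Y R \<and>
           \<not> sufficiency p Y A R' \<and> \<not> separation p Y A R'"
proof (intro exI conjI)
  let ?Y = "\<lambda>\<omega>::nat. odd \<omega>" and ?A = "\<lambda>\<omega>::nat. 2 \<le> \<omega>"
  show "sufficiency pp ?Y ?A (\<lambda>_. False)"
    unfolding sufficiency_def cond_indep_def pp_prob by auto
  show "separation pp ?Y ?A (\<lambda>_. False)"
    unfolding separation_def cond_indep_def pp_prob by auto
  show "accuracy pp ?Y (\<lambda>\<omega>. ?Y \<omega> \<and> ?A \<omega>) > accuracy pp ?Y (\<lambda>_. False)"
    unfolding accuracy_def pp_prob by simp
  show "\<not> sufficiency pp ?Y ?A (\<lambda>\<omega>. ?Y \<omega> \<and> ?A \<omega>)"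
    unfolding sufficiency_def cond_indep_def not_all
    by (rule exI[of _ True], rule exI[of _ True], rule exI[of _ False]) (simp add: pp_prob)
  show "\<not> separation pp ?Y ?A (\<lambda>\<omega>. ?Y \<omega> \<and> ?A \<omega>)"
    unfolding separation_def cond_indep_def not_all
    by (rule exI[of _ True], rule exI[of _ True], rule exI[of _ True]) (simp add: pp_prob)
qed

end
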